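(* Let $G$ be a simple loopless graph on $[L]$, $p\ge1$, and let $\Phi_p:\Pi_{2p}(G)\to[\mathcal{T}(G)]^{2p}$ be the map defined recursively below. For $(\pi,\phi)\in\Pi_{2p}(G)$ and $w=\Phi_p(\pi,\phi)=(w_1,\dots,w_{2p})$ (with $w_0:=e$), for every block $\{s,r\}\in\pi$ with $s<r$ we have \[ |w_s|=|w_{s-1}|+1\quad\text{and}\quad |w_r|=|w_{r-1}|-1. \]
   Context: $\mathcal{T}(G)=\langle v\in[L]: uv=vu \text{ for } (u,v)\in E(G)\rangle$ is the trace monoid of $G$ (words in letters $[L]$ modulo commutation of adjacent letters), $e$ the empty word, $|w|$ the length of a word. $P_2(2p)$ is the set of pair partitions of $[2p]$; blocks $\{u_1,v_1\},\{u_2,v_2\}$ cross if $u_1<u_2<v_1<v_2$; $F_\pi$ is the graph on the blocks of $\pi$ with edges between crossing blocks. $\Pi_{2p}(G)=\{(\pi,\phi):\pi\in P_2(2p),\ \phi\in\operatorname{Hom}(F_\pi,G)\}$, where $\phi$ maps blocks to $[L]$ and crossing blocks to adjacent vertices. Definition of $\Phi_p$: (1) For $p=1$, $P_2(2)=\{\{\{1,2\}\}\}$; if $\phi$ assigns label $i$ to the block, $\Phi_1(\pi,\phi)=(i,e)$. (2) Given $\Phi_p$ and $(\pi,\phi)\in\Pi_{2(p+1)}(G)$, let $r$ be the smallest index in $[2(p+1)]$ that is the larger element of its block, let $U=\{s,r\}\in\pi$ with $s<r$, $i_s=\phi(U)$, $\sigma=\pi\setminus\{U\}$, $\psi=\phi|_\sigma$.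 Identify $P_2([2(p+1)]\setminus\{s,r\})$ with $P_2(2p)$ via the order-preserving bijection $[2(p+1)]\setminus\{s,r\}\to[2p]$, and write $u=\Phi_p(\sigma,\psi)=(u_k)_{k\in[2(p+1)]\setminus\{s,r\}}$; for an index $k$ let $u_{k^-}$ denote $u_j$ for the largest $j<k$ with $j\notin\{s,r\}$, and $u_{k^-}=e$ if no such $j\ge1$ exists. Then $\Phi_{p+1}(\pi,\phi)_k=u_k$ for $k<s$; $=i_s u_{s^-}$ for $k=s$; $=i_su_k$ for $s<k<r$; $=u_{r^-}$ for $k=r$; $=u_k$ for $k>r$ (products taken in $\mathcal{T}(G)$). *)

theory Defs
  imports Main
begin

definition simple_graph_on :: "nat \<Rightarrow> (nat \<Rightarrow> nat \<Rightarrow> bool) \<Rightarrow> bool" where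
  "simple_graph_on L E \<longleftrightarrow>
     (\<forall>a b. E a b \<longrightarrow> E b a) \<and> (\<forall>a. \<not> E a a) \<and>
     (\<forall>a b. E a b \<longrightarrow> a \<in> {1..L} \<and> b \<in> {1..L})"

type_synonym trace = "nat list set"

definition tswap :: "(nat \<Rightarrow> nat \<Rightarrow> bool) \<Rightarrow> nat list \<Rightarrow> nat list \<Rightarrow> bool" where
  "tswap E u v \<longleftrightarrow> (\<exists>x y a b. u = x @ [a, b] @ y \<and> v = x @ [b, a] @ y \<and> E a b)"

definition tequiv :: "(nat \<Rightarrow> nat \<Rightarrow> bool) \<Rightarrow> nat list \<Rightarrow> nat list \<Rightarrow> bool" where
  "tequiv E = equivclp (tswap E)"

definition tclass :: "(nat \<Rightarrow> nat \<Rightarrow> bool) \<Rightarrow> nat list \<Rightarrow> trace" where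
  "tclass E w = {v. tequiv E w v}"

definition tempty :: "(nat \<Rightarrow> nat \<Rightarrow> bool) \<Rightarrow> trace" where
  "tempty E = tclass E []"

definition tletter :: "(nat \<Rightarrow> nat \<Rightarrow> bool) \<Rightarrow> nat \<Rightarrow> trace" where
  "tletter E i = tclass E [i]"

definition tmul :: "(nat \<Rightarrow> nat \<Rightarrow> bool) \<Rightarrow> trace \<Rightarrow> trace \<Rightarrow> trace" where
  "tmul E A B = tclass E ((SOME a. a \<in> A) @ (SOME b. b \<in> B))"

definition tlen :: "trace \<Rightarrow> nat" where
  "tlen A = length (SOME w. w \<in> A)"

definition pair_partition :: "nat set \<Rightarrow> (nat \<times> nat) set \<Rightarrow> bool" where
  "pair_partition S \<pi> \<longleftrightarrow>
     (\<forall>(s, r) \<in> \<pi>. s < r \<and> s \<in> S \<and> r \<in> S) \<and>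
     (\<forall>k \<in> S. \<exists>!b \<in> \<pi>. k = fst b \<or> k = snd b)"

definition crosses :: "nat \<times> nat \<Rightarrow> nat \<times> nat \<Rightarrow> bool" where
  "crosses b c \<longleftrightarrow>
     (fst b < fst c \<and> fst c < snd b \<and> snd b < snd c) \<or>
     (fst c < fst b \<and> fst b < snd c \<and> snd c < snd b)"

definition is_hom :: "nat \<Rightarrow> (nat \<Rightarrow> nat \<Rightarrow> bool) \<Rightarrow> (nat \<times> nat) set \<Rightarrow> (nat \<times> nat \<Rightarrow> nat) \<Rightarrow> bool" where
  "is_hom L E \<pi> \<phi> \<longleftrightarrow>
     (\<forall>b \<in> \<pi>. \<phi> b \<in> {1..L}) \<and> (\<forall>b \<in> \<pi>. \<forall>c \<in> \<pi>. crosses b c \<longrightarrow> E (\<phi> b) (\<phi> c))"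

definition Pi_set :: "nat \<Rightarrow> (nat \<Rightarrow> nat \<Rightarrow> bool) \<Rightarrow> nat \<Rightarrow> ((nat \<times> nat) set \<times> (nat \<times> nat \<Rightarrow> nat)) set" where
  "Pi_set L E p = {(\<pi>, \<phi>). pair_partition {1..2*p} \<pi> \<and> is_hom L E \<pi> \<phi>}"

text \<open>Defined on pair partitions of an arbitrary finite set of indices; the indices
  of the sub-partition are kept as they are (this realises the order-preserving
  identification with [2p] used in the paper).\<close>

primrec Phi_aux :: "(nat \<Rightarrow> nat \<Rightarrow> bool) \<Rightarrow> nat \<Rightarrow> (nat \<times> nat) set \<Rightarrow> (nat \<times> nat \<Rightarrow> nat) \<Rightarrow> nat \<Rightarrow> trace" where
  "Phi_aux E 0 \<pi> \<phi> = (\<lambda>k. tempty E)"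
| "Phi_aux E (Suc n) \<pi> \<phi> =
     (let r = Min {r. \<exists>s. (s, r) \<in> \<pi>};
          s = (THE s. (s, r) \<in> \<pi>);
          i = \<phi> (s, r);
          \<sigma> = \<pi> - {(s, r)};
          u = Phi_aux E n \<sigma> \<phi>;
          idx = fst ` \<sigma> \<union> snd ` \<sigma>;
          pred = (\<lambda>k. if (\<exists>j \<in> idx. j < k) then u (Max {j \<in> idx. j < k}) else tempty E)
      in (\<lambda>k. if k < s then u k
              else if k = s then tmul E (tletter E i) (pred s)
              else if k < r then tmul E (tletter E i) (u k)
              else if k = r then pred r
              else u k))"

definition Phi :: "(nat \<Rightarrow> nat \<Rightarrow> bool) \<Rightarrow> (nat \<times> nat) set \<Rightarrow> (nat \<times> nat \<Rightarrow> nat) \<Rightarrow> nat \<Rightarrow> trace" where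
  "Phi E \<pi> \<phi> = Phi_aux E (card \<pi>) \<pi> \<phi>"

end

theory Submission
  imports Defs
begin

lemma tswap_len: "tswap E u v \<Longrightarrow> length u = length v"
  unfolding tswap_def by auto

lemma tequiv_len: "tequiv E u v \<Longrightarrow> length u = length v"
  unfolding tequiv_def
proof (induction rule: equivclp_induct)
  case base then show ?case by simp
next
  case (step y z) then show ?case
    by (auto dest: tswap_len)
qed

lemma tlen_tclass: "tlen (tclass E w) = length w"
proof -
  have "w \<in> tclass E w" by (simp add: tclass_def tequiv_def)
  then have "(SOME v. v \<in> tclass E w) \<in> tclass E w" by (rule someI)
  then show ?thesis unfolding tlen_def tclass_def by (auto dest: tequiv_len)
qed

lemma tlen_tmul: "tlen (tmul E A B) = tlen A + tlen B"
  unfolding tmul_def tlen_tclass by (simp add: tlen_def)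

lemma tlen_tempty: "tlen (tempty E) = 0"
  unfolding tempty_def by (simp add: tlen_tclass)

lemma tlen_tletter: "tlen (tletter E i) = 1"
  unfolding tletter_def by (simp add: tlen_tclass)

definition good :: "(nat \<times> nat) set \<Rightarrow> bool" where
  "good \<pi> \<longleftrightarrow> finite \<pi> \<and> (\<forall>x\<in>\<pi>. fst x < snd x) \<and>
    (\<forall>x\<in>\<pi>. \<forall>y\<in>\<pi>. x \<noteq> y \<longrightarrow> fst x \<noteq> fst y \<and> fst x \<noteq> snd y \<and> snd x \<noteq> fst y \<and> snd x \<noteq> snd y)"

definition cnt :: "(nat \<times> nat) set \<Rightarrow> nat \<Rightarrow> nat" where
  "cnt \<pi> k = card {x\<in>\<pi>. fst x \<le> k \<and> k < snd x}"

lemma good_sub: "good \<pi> \<Longrightarrow> \<sigma> \<subseteq> \<pi> \<Longrightarrow> good \<sigma>"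
  unfolding good_def by (meson finite_subset subsetD)

lemma main:
  "\<forall>\<pi>. card \<pi> = n \<longrightarrow> good \<pi> \<longrightarrow> (\<forall>k. tlen (Phi_aux E n \<pi> \<phi> k) = cnt \<pi> k)"
proof (induction n)
  case 0
  show ?case
  proof (intro allI impI)
    fix \<pi> k assume "card \<pi> = 0" "good \<pi>"
    then have "\<pi> = {}" unfolding good_def by auto
    then show "tlen (Phi_aux E 0 \<pi> \<phi> k) = cnt \<pi> k" by (simp add: cnt_def tlen_tempty)
  qed
next
  case (Suc n)
  show ?case
  proof (intro allI impI)
    fix \<pi> k assume cp: "card \<pi> = Suc n" and g: "good \<pi>"
    have fin: "finite \<pi>" using g good_def by auto
    have ne: "\<pi> \<noteq> {}" using cp by auto
    define R where "R = {r. \<exists>s. (s, r) \<in> \<pi>}"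
    have "R = snd ` \<pi>" unfolding R_def by force
    then have finR: "finite R" and neR: "R \<noteq> {}" using fin ne by auto
    define r where "r = Min R"
    have "r \<in> R" unfolding r_def using finR neR by simp
    then obtain s where sr: "(s, r) \<in> \<pi>" unfolding R_def by auto
    have uniq: "\<And>s'. (s', r) \<in> \<pi> \<Longrightarrow> s' = s"
      using g sr unfolding good_def by fastforce
    have the_s: "(THE s. (s, r) \<in> \<pi>) = s"
      using sr uniq by blast
    define \<sigma> where "\<sigma> = \<pi> - {(s, r)}"
    have cs: "card \<sigma> = n" unfolding \<sigma>_def using cp sr fin by simp
    have gs: "good \<sigma>" using g good_sub \<sigma>_def by blast
    define u where "u = Phi_aux E n \<sigma> \<phi>"
    have IH: "\<And>k. tlen (u k) = cnt \<sigma> k" using Suc.IH cs gs u_def by blast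
    define idx where "idx = fst ` \<sigma> \<union> snd ` \<sigma>"
    define pred where "pred = (\<lambda>k. if (\<exists>j \<in> idx. j < k) then u (Max {j \<in> idx. j < k}) else tempty E)"
    have slr: "s < r" using g sr unfolding good_def by auto
    have s_notin: "s \<notin> idx" and r_notin: "r \<notin> idx"
      using g sr unfolding good_def idx_def \<sigma>_def by (auto, force+)
    have finidx: "finite idx" unfolding idx_def using gs good_def by auto
    have predlen: "tlen (pred k) = cnt \<sigma> k" if kn: "k \<notin> idx" for k
    proof (cases "\<exists>j \<in> idx. j < k")
      case True
      define j where "j = Max {j \<in> idx. j < k}"
      have jin: "j \<in> idx" "j < k" unfolding j_def using True finidx
        by (smt (verit, del_insts) Max_in empty_iff finite_nat_set_iff_bounded mem_Collect_eq)+
      have jmax: "\<And>i. i \<in> idx \<Longrightarrow> i < k \<Longrightarrow> i \<le> j" unfolding j_def using finidx by simp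
      have iff: "(fst x \<le> j \<and> j < snd x) \<longleftrightarrow> (fst x \<le> k \<and> k < snd x)" if x: "x \<in> \<sigma>" for x
      proof
        have fi: "fst x \<in> idx" "snd x \<in> idx" using x unfolding idx_def by auto
        { assume h: "fst x \<le> j \<and> j < snd x"
          have "snd x \<noteq> k" using fi kn by auto
          moreover have "\<not> snd x < k" using jmax[of "snd x"] fi h by auto
          ultimately show "fst x \<le> k \<and> k < snd x" using h jin by auto
        }
        { assume h: "fst x \<le> k \<and> k < snd x"
          have "fst x \<noteq> k" using fi kn by auto
          then have "fst x \<le> j" using jmax[of "fst x"] fi h by auto
          then show "fst x \<le> j \<and> j < snd x" using h jin by auto
        }
      qed
      have "{x\<in>\<sigma>. fst x \<le> j \<and> j < snd x} = {x\<in>\<sigma>. fst x \<le> k \<and> k < snd x}"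
        using iff by blast
      then show ?thesis using True IH unfolding pred_def cnt_def j_def by simp
    next
      case False
      have "{x\<in>\<sigma>. fst x \<le> k \<and> k < snd x} = {}"
      proof -
        { fix x assume "x \<in> \<sigma>" "fst x \<le> k"
          then have "fst x \<in> idx" unfolding idx_def by auto
          then have False using False kn \<open>fst x \<le> k\<close> by (metis le_neq_implies_less) }
        then show ?thesis by auto
      qed
      then have "cnt \<sigma> k = 0" unfolding cnt_def by (metis card.empty)
      then show ?thesis using False unfolding pred_def by (simp add: tlen_tempty)
    qed
    have cpi: "cnt \<pi> k = cnt \<sigma> k + (if s \<le> k \<and> k < r then 1 else 0)" for k
    proof -
      have "\<pi> = insert (s, r) \<sigma>" unfolding \<sigma>_def using sr by auto
      then have "{x\<in>\<pi>. fst x \<le> k \<and> k < snd x} =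
          (if s \<le> k \<and> k < r then insert (s, r) {x\<in>\<sigma>. fst x \<le> k \<and> k < snd x} else {x\<in>\<sigma>. fst x \<le> k \<and> k < snd x})"
        by auto
      moreover have "finite {x\<in>\<sigma>. fst x \<le> k \<and> k < snd x}" using gs good_def by auto
      moreover have "(s, r) \<notin> \<sigma>" unfolding \<sigma>_def by auto
      ultimately show ?thesis unfolding cnt_def by simp
    qed
    have eq: "Phi_aux E (Suc n) \<pi> \<phi> = (\<lambda>k. if k < s then u k
              else if k = s then tmul E (tletter E (\<phi> (s, r))) (pred s)
              else if k < r then tmul E (tletter E (\<phi> (s, r))) (u k)
              else if k = r then pred r
              else u k)"
      unfolding Phi_aux.simps Let_def R_def[symmetric] r_def[symmetric] the_s
      unfolding \<sigma>_def[symmetric] u_def[symmetric] idx_def[symmetric] pred_def[symmetric]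
      unfolding pred_def by (rule refl)
    show "tlen (Phi_aux E (Suc n) \<pi> \<phi> k) = cnt \<pi> k"
      unfolding eq using IH predlen[OF s_notin] predlen[OF r_notin] cpi[of k] slr
      by (auto simp: tlen_tmul tlen_tletter)
  qed
qed

theorem lemma3p1:
  fixes L p :: nat and E :: "nat \<Rightarrow> nat \<Rightarrow> bool"
    and \<pi> :: "(nat \<times> nat) set" and \<phi> :: "nat \<times> nat \<Rightarrow> nat"
  assumes "simple_graph_on L E"
    and "p \<ge> 1"
    and "(\<pi>, \<phi>) \<in> Pi_set L E p"
    and "(s, r) \<in> \<pi>"
  shows "let W = (\<lambda>k. if k = 0 then tempty E else Phi E \<pi> \<phi> k) in
           int (tlen (W s)) = int (tlen (W (s - 1))) + 1 \<and>
           int (tlen (W r)) = int (tlen (W (r - 1))) - 1"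
proof -
  have pp: "pair_partition {1..2*p} \<pi>" using assms(3) unfolding Pi_set_def by auto
  have sub: "\<pi> \<subseteq> {1..2*p} \<times> {1..2*p}" using pp unfolding pair_partition_def by auto
  have fin: "finite \<pi>" using finite_subset[OF sub] by simp
  have lt: "\<forall>x\<in>\<pi>. fst x < snd x" using pp unfolding pair_partition_def by auto
  have dis: "\<forall>x\<in>\<pi>. \<forall>y\<in>\<pi>. x \<noteq> y \<longrightarrow> fst x \<noteq> fst y \<and> fst x \<noteq> snd y \<and> snd x \<noteq> fst y \<and> snd x \<noteq> snd y"
  proof (intro ballI impI)
    fix x y assume xy: "x \<in> \<pi>" "y \<in> \<pi>" "x \<noteq> y"
    have u: "\<And>k. k \<in> {1..2*p} \<Longrightarrow> \<exists>!b \<in> \<pi>. k = fst b \<or> k = snd b"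
      using pp unfolding pair_partition_def by blast
    have "fst x \<in> {1..2*p}" "snd x \<in> {1..2*p}" using sub xy by auto
    then show "fst x \<noteq> fst y \<and> fst x \<noteq> snd y \<and> snd x \<noteq> fst y \<and> snd x \<noteq> snd y"
      using u[of "fst x"] u[of "snd x"] xy by metis
  qed
  have g: "good \<pi>" unfolding good_def using fin lt dis by blast
  define W where "W = (\<lambda>k. if k = 0 then tempty E else Phi E \<pi> \<phi> k)"
  have c0: "cnt \<pi> 0 = 0"
  proof -
    have "{x\<in>\<pi>. fst x \<le> 0 \<and> 0 < snd x} = {}" using sub by fastforce
    then show ?thesis unfolding cnt_def by (metis card.empty)
  qed
  have Wl: "tlen (W k) = cnt \<pi> k" for k
    using main[of "card \<pi>" E \<phi>] g c0 unfolding W_def Phi_def by (simp add: tlen_tempty)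
  have sr: "s < r" "1 \<le> s" using lt assms(4) sub by auto
  have setfin: "finite {x\<in>\<pi>. P x}" for P using fin by simp
  have A: "{x\<in>\<pi>. fst x \<le> s \<and> s < snd x} = insert (s, r) {x\<in>\<pi>. fst x \<le> s - 1 \<and> s - 1 < snd x}"
    using dis assms(4) sr lt by fastforce
  have A': "(s, r) \<notin> {x\<in>\<pi>. fst x \<le> s - 1 \<and> s - 1 < snd x}" using sr by auto
  have B: "{x\<in>\<pi>. fst x \<le> r - 1 \<and> r - 1 < snd x} = insert (s, r) {x\<in>\<pi>. fst x \<le> r \<and> r < snd x}"
    using dis assms(4) sr lt by fastforce
  have B': "(s, r) \<notin> {x\<in>\<pi>. fst x \<le> r \<and> r < snd x}" by auto
  have "cnt \<pi> s = cnt \<pi> (s - 1) + 1" unfolding cnt_def A using A' setfin by simp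
  moreover have "cnt \<pi> (r - 1) = cnt \<pi> r + 1" unfolding cnt_def B using B' setfin by simp
  ultimately show ?thesis unfolding W_def[symmetric] Let_def Wl by simp
qed

end
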